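(* Let $d\ge3$, $h\ge1$, $1\le n\le h$, and let $j$ be a vertex at distance $n$ from the root. Then the order of the image of $\bar{\mathbf{x}}_j$ in the quotient group $G(d,h)/G_{n-1}(d,h)$ is $\theta(d,h+2-n)$, where $\theta(d,m):=\frac{(d-1)^m-1}{d-2}$.
   Context: Let $\mathcal{T}(d,h)$ be the rooted tree in which the root $0$ has $d$ children, every vertex at distance $1,\dots,h-1$ from the root has $d-1$ children, and the vertices at distance $h$ are leaves. Let $V$ be its vertex set, $A$ its adjacency matrix, $\Delta := dI-A$, and $\Lambda\subset\mathbb{Z}^V$ the lattice spanned by the rows of $\Delta$. Then $G(d,h):=\mathbb{Z}^V/\Lambda$; $\{\mathbf{x}_i:i\in V\}$ is the standard basis of $\mathbb{Z}^V$ and $\bar{\mathbf{v}}$ denotes the image of $\mathbf{v}$ in $G(d,h)$. For $0\le m\le h$, $G_m(d,h)$ is the subgroup of $G(d,h)$ generated by $\{\bar{\mathbf{x}}_i : i \text{ at distance}\le m\text{ from the root}\}$. *)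

theory Defs
  imports "HOL-Algebra.Algebra"
begin

text \<open>Vertices of T(d,h): lists c of length at most h (the path of child
indices from the root); the root is the empty list, the first index is < d,
all later indices are < d-1. The distance of a vertex from the root is its length.\<close>

definition tree_verts :: "nat \<Rightarrow> nat \<Rightarrow> nat list set" where
  "tree_verts d h = {v. length v \<le> h \<and>
      (\<forall>k<length v. v ! k < (if k = 0 then d else d - 1))}"

definition tree_adj :: "nat \<Rightarrow> nat \<Rightarrow> nat list \<Rightarrow> nat list \<Rightarrow> bool" where
  "tree_adj d h u v \<longleftrightarrow> u \<in> tree_verts d h \<and> v \<in> tree_verts d h \<and>
     ((u \<noteq> [] \<and> v = butlast u) \<or> (v \<noteq> [] \<and> u = butlast v))"

definition adjmat :: "nat \<Rightarrow> nat \<Rightarrow> nat list \<Rightarrow> nat list \<Rightarrow> int" where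
  "adjmat d h u v = (if tree_adj d h u v then 1 else 0)"

text \<open>The free abelian group Z^V (finitely many coordinates, functions vanishing off V),
as an (additively meant) HOL-Algebra monoid.\<close>
definition ZV :: "nat \<Rightarrow> nat \<Rightarrow> (nat list \<Rightarrow> int) monoid" where
  "ZV d h = \<lparr>carrier = {f. \<forall>k. k \<notin> tree_verts d h \<longrightarrow> f k = 0},
            monoid.mult = (\<lambda>f g k. f k + g k), monoid.one = (\<lambda>k. 0)\<rparr>"

definition basisvec :: "nat list \<Rightarrow> nat list \<Rightarrow> int" where
  "basisvec i = (\<lambda>k. if k = i then 1 else 0)"

definition delta_row :: "nat \<Rightarrow> nat \<Rightarrow> nat list \<Rightarrow> nat list \<Rightarrow> int" where
  "delta_row d h i = (\<lambda>k. if k \<in> tree_verts d h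
       then (if k = i then int d else 0) - adjmat d h i k else 0)"

definition Lam :: "nat \<Rightarrow> nat \<Rightarrow> (nat list \<Rightarrow> int) set" where
  "Lam d h = generate (ZV d h) (delta_row d h ` tree_verts d h)"

definition Gdh :: "nat \<Rightarrow> nat \<Rightarrow> (nat list \<Rightarrow> int) set monoid" where
  "Gdh d h = ZV d h Mod Lam d h"

definition bar :: "nat \<Rightarrow> nat \<Rightarrow> (nat list \<Rightarrow> int) \<Rightarrow> (nat list \<Rightarrow> int) set" where
  "bar d h v = Lam d h #>\<^bsub>ZV d h\<^esub> v"

definition Gm :: "nat \<Rightarrow> nat \<Rightarrow> nat \<Rightarrow> (nat list \<Rightarrow> int) set set" where
  "Gm d h m = generate (Gdh d h)
      {bar d h (basisvec i) | i. i \<in> tree_verts d h \<and> length i \<le> m}"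

definition theta :: "nat \<Rightarrow> nat \<Rightarrow> real" where
  "theta d m = ((real d - 1) ^ m - 1) / (real d - 2)"

end

theory Submission
  imports Defs
begin


lemma ZV_simps[simp]:
  "carrier (ZV d h) = {f. \<forall>k. k \<notin> tree_verts d h \<longrightarrow> f k = 0}"
  "x \<otimes>\<^bsub>ZV d h\<^esub> y = (\<lambda>k. x k + y k)"
  "\<one>\<^bsub>ZV d h\<^esub> = (\<lambda>k. 0)"
  by (simp_all add: ZV_def)

lemma ZV_comm_group: "comm_group (ZV d h)"
proof (rule comm_groupI)
  fix x assume "x \<in> carrier (ZV d h)"
  then show "\<exists>y\<in>carrier (ZV d h). y \<otimes>\<^bsub>ZV d h\<^esub> x = \<one>\<^bsub>ZV d h\<^esub>"
    by (intro bexI[of _ "\<lambda>k. - x k"]) auto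
qed (auto simp: add.assoc add.commute)

lemma ZV_group: "group (ZV d h)"
  using ZV_comm_group comm_group_def by blast

lemma ZV_monoid: "monoid (ZV d h)"
  using ZV_group group.is_monoid by blast

lemma ZV_inv: "f \<in> carrier (ZV d h) \<Longrightarrow> inv\<^bsub>ZV d h\<^esub> f = (\<lambda>k. - f k)"
  by (rule group.inv_equality[OF ZV_group]) auto

lemma ZV_pow: "f \<in> carrier (ZV d h) \<Longrightarrow> f [^]\<^bsub>ZV d h\<^esub> (k::nat) = (\<lambda>i. int k * f i)"
  by (induction k) (auto simp: monoid.nat_pow_0[OF ZV_monoid] monoid.nat_pow_Suc[OF ZV_monoid] algebra_simps)

lemma finite_V: "finite (tree_verts d h)"
proof -
  have "tree_verts d h \<subseteq> {xs. set xs \<subseteq> {..<d} \<and> length xs \<le> h}"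
  proof safe
    fix xs x assume xs: "xs \<in> tree_verts d h" and x: "x \<in> set xs"
    then obtain i where i: "i < length xs" "x = xs ! i" by (auto simp: in_set_conv_nth)
    then have "xs ! i < (if i = 0 then d else d - 1)" using xs by (simp add: tree_verts_def)
    then show "x < d" using i by (cases "i = 0") auto
  next
    fix xs assume "xs \<in> tree_verts d h" then show "length xs \<le> h" by (auto simp: tree_verts_def)
  qed
  then show ?thesis by (rule finite_subset) (rule finite_lists_length_le, simp)
qed

lemma butlast_in: "v \<in> tree_verts d h \<Longrightarrow> butlast v \<in> tree_verts d h"
  by (auto simp: tree_verts_def nth_butlast)

lemma snoc_in: "w @ [c] \<in> tree_verts d h \<longleftrightarrow>
   w \<in> tree_verts d h \<and> length w < h \<and> c < (if w = [] then d else d - 1)"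
proof
  assume a: "w @ [c] \<in> tree_verts d h"
  have 1: "length w < h" using a by (auto simp: tree_verts_def)
  have 2: "\<forall>k<length w. w ! k < (if k = 0 then d else d - 1)"
  proof (intro allI impI)
    fix k assume "k < length w"
    then show "w ! k < (if k = 0 then d else d - 1)"
      using a by (auto simp: tree_verts_def nth_append dest!: spec[of _ k])
  qed
  have 3: "c < (if w = [] then d else d - 1)"
    using a by (auto simp: tree_verts_def dest!: spec[of _ "length w"])
  show "w \<in> tree_verts d h \<and> length w < h \<and> c < (if w = [] then d else d - 1)"
    using 1 2 3 by (auto simp: tree_verts_def)
next
  assume a: "w \<in> tree_verts d h \<and> length w < h \<and> c < (if w = [] then d else d - 1)"
  show "w @ [c] \<in> tree_verts d h"
    unfolding tree_verts_def
  proof (safe)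
    show "length (w @ [c]) \<le> h" using a by simp
  next
    fix k assume "k < length (w @ [c])"
    then have "k < length w \<or> k = length w" by auto
    then show "(w @ [c]) ! k < (if k = 0 then d else d - 1)"
      using a by (auto simp: tree_verts_def nth_append)
  qed
qed



lemma adj_sym: "adjmat d h v k = adjmat d h k v"
  unfolding adjmat_def tree_adj_def by auto

lemma adj_set:
  assumes w: "w \<in> tree_verts d h"
  shows "{u \<in> tree_verts d h. tree_adj d h w u} =
     (if w = [] then {} else {butlast w}) \<union>
     (if length w < h then (\<lambda>c. w @ [c]) ` {..<(if w = [] then d else d - 1)} else {})"
proof (intro equalityI subsetI)
  fix u assume u: "u \<in> {u \<in> tree_verts d h. tree_adj d h w u}"
  then have uV: "u \<in> tree_verts d h" and adj: "(w \<noteq> [] \<and> u = butlast w) \<or> (u \<noteq> [] \<and> w = butlast u)"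
    by (auto simp: tree_adj_def)
  from adj show "u \<in> (if w = [] then {} else {butlast w}) \<union>
     (if length w < h then (\<lambda>c. w @ [c]) ` {..<(if w = [] then d else d - 1)} else {})"
  proof
    assume "w \<noteq> [] \<and> u = butlast w" then show ?thesis by auto
  next
    assume a: "u \<noteq> [] \<and> w = butlast u"
    then have ueq: "u = w @ [last u]" by simp
    then have "w @ [last u] \<in> tree_verts d h" using uV by simp
    then have "length w < h \<and> last u < (if w = [] then d else d - 1)" using snoc_in by blast
    then show ?thesis using ueq by auto
  qed
next
  fix u assume u: "u \<in> (if w = [] then {} else {butlast w}) \<union>
     (if length w < h then (\<lambda>c. w @ [c]) ` {..<(if w = [] then d else d - 1)} else {})"
  then show "u \<in> {u \<in> tree_verts d h. tree_adj d h w u}"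
  proof (cases "w \<noteq> [] \<and> u = butlast w")
    case True then show ?thesis using w butlast_in by (auto simp: tree_adj_def)
  next
    case False
    then obtain c where c: "length w < h" "c < (if w = [] then d else d - 1)" "u = w @ [c]"
      using u by (auto split: if_splits)
    then have "u \<in> tree_verts d h" using w snoc_in by blast
    then show ?thesis using w c by (auto simp: tree_adj_def)
  qed
qed

lemma nb_sum:
  assumes w: "w \<in> tree_verts d h"
  shows "(\<Sum>u\<in>tree_verts d h. adjmat d h w u * G u) =
     (if w = [] then 0 else G (butlast w)) +
     (if length w < h then (\<Sum>c<(if w = [] then d else d - 1). G (w @ [c])) else 0)"
proof -
  define P where "P = (if w = [] then {} else {butlast w})"
  define C where "C = (if length w < h then (\<lambda>c. w @ [c]) ` {..<(if w = [] then d else d - 1)} else {})"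
  have "(\<Sum>u\<in>tree_verts d h. adjmat d h w u * G u) = (\<Sum>u\<in>{u \<in> tree_verts d h. tree_adj d h w u}. G u)"
    by (auto simp: sum.inter_filter[OF finite_V] adjmat_def intro!: sum.cong)
  also have "\<dots> = (\<Sum>u\<in>P \<union> C. G u)" using adj_set[OF w] by (simp add: P_def C_def)
  also have "\<dots> = sum G P + sum G C"
    by (rule sum.union_disjoint) (auto simp: P_def C_def dest: arg_cong[where f=length])
  also have "sum G P = (if w = [] then 0 else G (butlast w))" by (simp add: P_def)
  also have "sum G C = (if length w < h then (\<Sum>c<(if w = [] then d else d - 1). G (w @ [c])) else 0)"
    by (simp add: C_def sum.reindex inj_on_def)
  finally show ?thesis .
qed

definition th :: "nat \<Rightarrow> nat \<Rightarrow> nat" where "th d a = (\<Sum>i<a. (d - 1) ^ i)"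

lemma th_0[simp]: "th d 0 = 0" by (simp add: th_def)
lemma th_Suc: "th d (Suc a) = 1 + (d - 1) * th d a"
proof (induction a)
  case (Suc a)
  have "th d (Suc (Suc a)) = th d (Suc a) + (d - 1) ^ Suc a" by (simp add: th_def)
  also have "\<dots> = 1 + (d - 1) * (th d a + (d - 1) ^ a)" using Suc by (simp add: algebra_simps)
  also have "th d a + (d - 1) ^ a = th d (Suc a)" by (simp add: th_def)
  finally show ?case .
qed (simp add: th_def)

definition Fn :: "nat \<Rightarrow> nat \<Rightarrow> nat list \<Rightarrow> nat list \<Rightarrow> nat" where
  "Fn d h j u = (if take (length j) u = j then th d (Suc (h - length u)) else 0)"



lemma th_Suc_int: "d \<ge> 1 \<Longrightarrow> int (th d (Suc a)) = 1 + (int d - 1) * int (th d a)"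
  by (simp add: th_Suc of_nat_diff)

lemma th_rec1: "d \<ge> 3 \<Longrightarrow> int d * int (th d (Suc a)) - int (d - 1) * int (th d a) = int (th d (Suc (Suc a)))"
proof -
  assume d: "d \<ge> 3"
  have e0: "int (d - 1) = int d - 1" using d by simp
  have e1: "int (th d (Suc a)) = 1 + (int d - 1) * int (th d a)" using th_Suc_int[of d a] d by simp
  have e2: "int (th d (Suc (Suc a))) = 1 + (int d - 1) * int (th d (Suc a))" using th_Suc_int[of d "Suc a"] d by simp
  show ?thesis unfolding e2 e0 unfolding e1 by (simp add: algebra_simps)
qed

lemma key:
  assumes d: "d \<ge> 3" and j: "j \<in> tree_verts d h" and jn: "j \<noteq> []"
    and w: "w \<in> tree_verts d h"
  shows "int d * int (Fn d h j w) - (\<Sum>u\<in>tree_verts d h. adjmat d h w u * int (Fn d h j u))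
     = (if w = j then int (th d (Suc (Suc (h - length j)))) else 0)
       - (if w = butlast j then int (th d (Suc (h - length j))) else 0)"
proof -
  define n where "n = length j"
  have n1: "n \<ge> 1" using jn n_def by (cases j) auto
  have nh: "n \<le> h" using j n_def by (auto simp: tree_verts_def)
  have wh: "length w \<le> h" using w by (auto simp: tree_verts_def)
  let ?F = "\<lambda>u. int (Fn d h j u)"
  have S: "(\<Sum>u\<in>tree_verts d h. adjmat d h w u * ?F u) = (if w = [] then 0 else ?F (butlast w))
       + (if length w < h then (\<Sum>c<(if w = [] then d else d - 1). ?F (w @ [c])) else 0)"
    by (rule nb_sum[OF w])
  consider (A) "take n w = j" | (B) "w = butlast j" | (C) "take n w \<noteq> j" "w \<noteq> butlast j" by blast
  then show ?thesis
  proof cases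
    case A
    have "min n (length w) = n" using arg_cong[OF A, of length] n_def by simp
    then have wn: "length w \<ge> n" by simp
    then have wne: "w \<noteq> []" using n1 by auto
    define a where "a = h - length w"
    have Fw: "?F w = int (th d (Suc a))" using A by (simp add: Fn_def n_def a_def)
    have par: "?F (butlast w) = (if w = j then 0 else int (th d (Suc (Suc a))))"
    proof (cases "w = j")
      case True
      have "take n (butlast j) = butlast j" using n_def by simp
      moreover have "butlast j \<noteq> j"
      proof
        assume "butlast j = j" then have "length j - 1 = length j" by (metis length_butlast)
        then show False using jn by (cases j) auto
      qed
      ultimately show ?thesis using True by (simp add: Fn_def n_def)
    next
      case False
      have "length w \<noteq> n" using A False by auto
      then have "length w > n" using wn by simp
      then have "take n (butlast w) = j" using A by (simp add: take_butlast)
      moreover have "h - length (butlast w) = Suc a" using wh wne a_def by (cases w) auto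
      ultimately show ?thesis using False by (simp add: Fn_def n_def)
    qed
    have ch: "(if length w < h then (\<Sum>c<(if w = [] then d else d - 1). ?F (w @ [c])) else 0)
        = int (d - 1) * int (th d a)"
    proof (cases "length w < h")
      case True
      have "?F (w @ [c]) = int (th d a)" for c
      proof -
        have "take n (w @ [c]) = j" using A wn by simp
        moreover have "Suc (h - length (w @ [c])) = a" using True a_def by simp
        ultimately show ?thesis by (simp add: Fn_def n_def)
      qed
      then show ?thesis using True wne by simp
    next
      case False
      then have "a = 0" using a_def wh by simp
      then show ?thesis using False by simp
    qed
    have nb: "w \<noteq> butlast j"
    proof
      assume "w = butlast j" then have "length w = n - 1" using n_def by simp
      then show False using wn n1 by simp
    qed
    have LHS: "int d * ?F w - (\<Sum>u\<in>tree_verts d h. adjmat d h w u * ?F u)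
       = int d * int (th d (Suc a)) - (if w = j then 0 else int (th d (Suc (Suc a)))) - int (d - 1) * int (th d a)"
      using S Fw par ch wne by simp
    show ?thesis
    proof (cases "w = j")
      case True
      then have "a = h - length j" using a_def by simp
      then show ?thesis using LHS True th_rec1[OF d, of a] nb by simp
    next
      case False
      then show ?thesis using LHS th_rec1[OF d, of a] nb by simp
    qed
  next
    case B
    have wlen: "length w = n - 1" using B n_def by simp
    have jeq: "j = w @ [last j]" using B jn by simp
    have "w @ [last j] \<in> tree_verts d h" using j jeq[symmetric] by simp
    then have lastj: "last j < (if w = [] then d else d - 1)" and wV: "length w < h"
      using snoc_in by blast+
    have wnj: "w \<noteq> j" using wlen n1 n_def by auto
    have Fw: "?F w = 0"
    proof -
      have "take n w = w" using wlen by simp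
      then show ?thesis using wnj by (simp add: Fn_def n_def)
    qed
    have par: "(if w = [] then 0 else ?F (butlast w)) = 0"
    proof -
      have "take n (butlast w) = butlast w" using wlen by simp
      moreover have "butlast w \<noteq> j"
      proof
        assume "butlast w = j" then have "length (butlast w) = n" using n_def by simp
        then show False using wlen n1 by simp
      qed
      ultimately show ?thesis by (simp add: Fn_def n_def)
    qed
    have chc: "?F (w @ [c]) = (if c = last j then int (th d (Suc (h - n))) else 0)" for c
    proof -
      have "take n (w @ [c]) = w @ [c]" using wlen n1 by simp
      moreover have "(w @ [c] = j) = (c = last j)"
      proof
        assume "w @ [c] = j" then show "c = last j" by auto
      next
        assume "c = last j" then show "w @ [c] = j" using jeq[symmetric] by simp
      qed
      moreover have "length (w @ [c]) = n" using wlen n1 by simp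
      ultimately show ?thesis by (simp add: Fn_def n_def)
    qed
    have ch: "(\<Sum>c<(if w = [] then d else d - 1). ?F (w @ [c])) = int (th d (Suc (h - n)))"
      using lastj by (simp add: chc)
    show ?thesis using S Fw par ch wV wnj B n_def by simp
  next
    case C
    have wnj: "w \<noteq> j" using C n_def by auto
    have Fw: "?F w = 0" using C by (simp add: Fn_def n_def)
    have par: "(if w = [] then 0 else ?F (butlast w)) = 0"
    proof (cases "w = []")
      case False
      have "take n (butlast w) \<noteq> j"
      proof (cases "length w > n")
        case True then show ?thesis using C by (simp add: take_butlast)
      next
        case False
        then have "length (take n (butlast w)) < n" using \<open>w \<noteq> []\<close> by (cases w) auto
        then show ?thesis using n_def by auto
      qed
      then show ?thesis by (simp add: Fn_def n_def)
    qed simp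
    have chc: "?F (w @ [c]) = 0" for c
    proof -
      have "take n (w @ [c]) \<noteq> j"
      proof (cases "length w \<ge> n")
        case True then show ?thesis using C by simp
      next
        case False
        then have "take n (w @ [c]) = w @ [c]" by simp
        moreover have "w @ [c] \<noteq> j" using C by (metis butlast_snoc)
        ultimately show ?thesis by simp
      qed
      then show ?thesis by (simp add: Fn_def n_def)
    qed
    show ?thesis using S Fw par chc wnj C by simp
  qed
qed



lemma delta_carrier: "delta_row d h v \<in> carrier (ZV d h)" by (simp add: delta_row_def)
lemma basis_carrier: "i \<in> tree_verts d h \<Longrightarrow> basisvec i \<in> carrier (ZV d h)" by (auto simp: basisvec_def)

lemma Lam_subgroup: "subgroup (Lam d h) (ZV d h)"
  unfolding Lam_def by (rule group.generate_is_subgroup[OF ZV_group]) (auto simp: delta_row_def)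
lemma Lam_normal: "Lam d h \<lhd> ZV d h"
  by (rule comm_group.subgroup_imp_normal[OF ZV_comm_group Lam_subgroup])
lemma Gdh_comm: "comm_group (Gdh d h)"
  unfolding Gdh_def by (rule comm_group.abelian_FactGroup[OF ZV_comm_group Lam_subgroup])
lemma Gdh_group: "group (Gdh d h)" using Gdh_comm comm_group_def by blast

lemma bar_carrier: "v \<in> carrier (ZV d h) \<Longrightarrow> bar d h v \<in> carrier (Gdh d h)"
  by (auto simp: bar_def Gdh_def carrier_FactGroup)

lemma Gm_subgroup: "subgroup (Gm d h m) (Gdh d h)"
  unfolding Gm_def by (rule group.generate_is_subgroup[OF Gdh_group]) (auto intro: bar_carrier basis_carrier)
lemma Gm_normal: "Gm d h m \<lhd> Gdh d h"
  by (rule comm_group.subgroup_imp_normal[OF Gdh_comm Gm_subgroup])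

lemma bar_mult: "v \<in> carrier (ZV d h) \<Longrightarrow> w \<in> carrier (ZV d h) \<Longrightarrow>
   bar d h v \<otimes>\<^bsub>Gdh d h\<^esub> bar d h w = bar d h (v \<otimes>\<^bsub>ZV d h\<^esub> w)"
  unfolding bar_def Gdh_def by (simp add: normal.rcos_sum[OF Lam_normal])

lemma bar_pow: "v \<in> carrier (ZV d h) \<Longrightarrow> bar d h v [^]\<^bsub>Gdh d h\<^esub> (k::nat) = bar d h (v [^]\<^bsub>ZV d h\<^esub> k)"
  unfolding bar_def Gdh_def by (rule normal.FactGroup_pow[OF Lam_normal])

lemma bar_inv: "v \<in> carrier (ZV d h) \<Longrightarrow> inv\<^bsub>Gdh d h\<^esub> (bar d h v) = bar d h (inv\<^bsub>ZV d h\<^esub> v)"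
proof -
  assume v: "v \<in> carrier (ZV d h)"
  have "bar d h v \<in> carrier (ZV d h Mod Lam d h)" using bar_carrier[OF v] by (simp add: Gdh_def)
  then show ?thesis unfolding Gdh_def
    using normal.inv_FactGroup[OF Lam_normal] normal.rcos_inv[OF Lam_normal v] by (simp add: bar_def)
qed

lemma Gdh_one: "\<one>\<^bsub>Gdh d h\<^esub> = Lam d h" by (simp add: Gdh_def)

lemma bar_Lam: "a \<in> Lam d h \<Longrightarrow> bar d h a = Lam d h"
  unfolding bar_def by (rule subgroup.rcos_const[OF Lam_subgroup ZV_group])

lemma bar_zero: "bar d h (\<lambda>k. 0) = Lam d h"
  using bar_Lam[of "\<lambda>k. 0"] subgroup.one_closed[OF Lam_subgroup] by simp

lemma bar_eq: "a \<in> carrier (ZV d h) \<Longrightarrow> b \<in> carrier (ZV d h) \<Longrightarrow> bar d h a = bar d h b \<Longrightarrow>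
   a \<otimes>\<^bsub>ZV d h\<^esub> inv\<^bsub>ZV d h\<^esub> b \<in> Lam d h"
proof -
  assume a: "a \<in> carrier (ZV d h)" and b: "b \<in> carrier (ZV d h)" and e: "bar d h a = bar d h b"
  have "a \<in> Lam d h #>\<^bsub>ZV d h\<^esub> a" by (rule group.rcos_self[OF ZV_group a Lam_subgroup])
  then have "a \<in> Lam d h #>\<^bsub>ZV d h\<^esub> b" using e by (simp add: bar_def)
  then show ?thesis by (rule subgroup.rcos_module_imp[OF Lam_subgroup ZV_group b])
qed

lemma sub_pow:
  assumes G: "group G" and H: "subgroup H G" and x: "x \<in> H"
  shows "x [^]\<^bsub>G\<^esub> (k::nat) \<in> H"
proof (induction k)
  case 0
  have "x [^]\<^bsub>G\<^esub> (0::nat) = \<one>\<^bsub>G\<^esub>" by (rule monoid.nat_pow_0[OF group.is_monoid[OF G]])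
  then show ?case using subgroup.one_closed[OF H] by simp
next
  case (Suc k)
  have "x [^]\<^bsub>G\<^esub> (Suc k) = x [^]\<^bsub>G\<^esub> k \<otimes>\<^bsub>G\<^esub> x" by (rule monoid.nat_pow_Suc[OF group.is_monoid[OF G]])
  then show ?case using subgroup.m_closed[OF H Suc x] by simp
qed

lemma comb_in_Lam: "finite S \<Longrightarrow> S \<subseteq> tree_verts d h \<Longrightarrow>
   (\<lambda>k. \<Sum>v\<in>S. int (c v) * delta_row d h v k) \<in> Lam d h"
proof (induction S rule: finite_induct)
  case empty
  then show ?case using subgroup.one_closed[OF Lam_subgroup] by simp
next
  case (insert v S)
  have dv: "delta_row d h v \<in> Lam d h" unfolding Lam_def using insert.prems by (auto intro: generate.incl)
  have eq: "(\<lambda>k. \<Sum>v\<in>insert v S. int (c v) * delta_row d h v k)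
     = (delta_row d h v [^]\<^bsub>ZV d h\<^esub> c v) \<otimes>\<^bsub>ZV d h\<^esub> (\<lambda>k. \<Sum>v\<in>S. int (c v) * delta_row d h v k)"
    using insert.hyps by (simp add: ZV_pow[OF delta_carrier])
  have A: "delta_row d h v [^]\<^bsub>ZV d h\<^esub> c v \<in> Lam d h" by (rule sub_pow[OF ZV_group Lam_subgroup dv])
  have B: "(\<lambda>k. \<Sum>v\<in>S. int (c v) * delta_row d h v k) \<in> Lam d h" using insert.IH insert.prems by blast
  show ?case unfolding eq by (rule subgroup.m_closed[OF Lam_subgroup A B])
qed

lemma delta_pair: "v \<in> tree_verts d h \<Longrightarrow>
   (\<Sum>i\<in>tree_verts d h. f i * delta_row d h v i) = int d * f v - (\<Sum>i\<in>tree_verts d h. adjmat d h v i * f i)"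
proof -
  assume v: "v \<in> tree_verts d h"
  have "(\<Sum>i\<in>tree_verts d h. f i * delta_row d h v i)
     = (\<Sum>i\<in>tree_verts d h. (if i = v then int d * f v else 0) - adjmat d h v i * f i)"
    by (rule sum.cong) (auto simp: delta_row_def algebra_simps)
  also have "\<dots> = int d * f v - (\<Sum>i\<in>tree_verts d h. adjmat d h v i * f i)"
    using v by (simp add: sum_subtractf finite_V)
  finally show ?thesis .
qed

lemma basis_sum: "i \<in> tree_verts d h \<Longrightarrow> (\<Sum>u\<in>tree_verts d h. f u * basisvec i u) = f i"
proof -
  assume i: "i \<in> tree_verts d h"
  have "(\<Sum>u\<in>tree_verts d h. f u * basisvec i u) = (\<Sum>u\<in>tree_verts d h. if u = i then f i else 0)"
    by (rule sum.cong) (auto simp: basisvec_def)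
  then show ?thesis using i by (simp add: finite_V)
qed



lemma claimA:
  assumes d: "d \<ge> 3" and j: "j \<in> tree_verts d h" and jn: "j \<noteq> []"
  shows "bar d h (basisvec j [^]\<^bsub>ZV d h\<^esub> th d (Suc (Suc (h - length j)))) \<in> Gm d h (length j - 1)"
proof -
  define N where "N = th d (Suc (Suc (h - length j)))"
  define T where "T = th d (Suc (h - length j))"
  define p where "p = butlast j"
  define S where "S = (\<lambda>k. \<Sum>v\<in>tree_verts d h. int (Fn d h j v) * delta_row d h v k)"
  have pV: "p \<in> tree_verts d h" using butlast_in j p_def by blast
  have S_Lam: "S \<in> Lam d h" unfolding S_def by (rule comb_in_Lam) (auto simp: finite_V)
  have Scar: "S \<in> carrier (ZV d h)" using S_Lam subgroup.subset[OF Lam_subgroup] by blast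
  have pc: "basisvec p [^]\<^bsub>ZV d h\<^esub> T \<in> carrier (ZV d h)"
    by (rule monoid.nat_pow_closed[OF ZV_monoid basis_carrier[OF pV]])
  have eq: "basisvec j [^]\<^bsub>ZV d h\<^esub> N = S \<otimes>\<^bsub>ZV d h\<^esub> (basisvec p [^]\<^bsub>ZV d h\<^esub> T)"
  proof
    fix k
    show "(basisvec j [^]\<^bsub>ZV d h\<^esub> N) k = (S \<otimes>\<^bsub>ZV d h\<^esub> (basisvec p [^]\<^bsub>ZV d h\<^esub> T)) k"
    proof (cases "k \<in> tree_verts d h")
      case False
      then have "k \<noteq> j" "k \<noteq> p" using j pV by auto
      moreover have "S k = 0" using False by (simp add: S_def delta_row_def)
      ultimately show ?thesis
        unfolding ZV_pow[OF basis_carrier[OF j]] ZV_pow[OF basis_carrier[OF pV]] by (simp add: basisvec_def)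
    next
      case True
      have "S k = (\<Sum>v\<in>tree_verts d h. int (Fn d h j v) * delta_row d h k v)"
        unfolding S_def by (rule sum.cong) (auto simp: delta_row_def adj_sym True)
      also have "\<dots> = int d * int (Fn d h j k) - (\<Sum>v\<in>tree_verts d h. adjmat d h k v * int (Fn d h j v))"
        by (rule delta_pair[OF True])
      also have "\<dots> = (if k = j then int N else 0) - (if k = p then int T else 0)"
        using key[OF d j jn True] N_def T_def p_def by simp
      finally show ?thesis
        unfolding ZV_pow[OF basis_carrier[OF j]] ZV_pow[OF basis_carrier[OF pV]] by (simp add: basisvec_def)
    qed
  qed
  have "bar d h (basisvec j [^]\<^bsub>ZV d h\<^esub> N) = bar d h S \<otimes>\<^bsub>Gdh d h\<^esub> bar d h (basisvec p [^]\<^bsub>ZV d h\<^esub> T)"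
    unfolding eq by (rule bar_mult[OF Scar pc, symmetric])
  also have "bar d h S = \<one>\<^bsub>Gdh d h\<^esub>" by (simp add: bar_Lam S_Lam Gdh_one)
  also have "\<one>\<^bsub>Gdh d h\<^esub> \<otimes>\<^bsub>Gdh d h\<^esub> bar d h (basisvec p [^]\<^bsub>ZV d h\<^esub> T) = bar d h (basisvec p [^]\<^bsub>ZV d h\<^esub> T)"
    by (rule monoid.l_one[OF group.is_monoid[OF Gdh_group] bar_carrier[OF pc]])
  also have "bar d h (basisvec p [^]\<^bsub>ZV d h\<^esub> T) = bar d h (basisvec p) [^]\<^bsub>Gdh d h\<^esub> T"
    by (rule bar_pow[OF basis_carrier[OF pV], symmetric])
  finally have e: "bar d h (basisvec j [^]\<^bsub>ZV d h\<^esub> N) = bar d h (basisvec p) [^]\<^bsub>Gdh d h\<^esub> T" .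
  have "bar d h (basisvec p) \<in> Gm d h (length j - 1)"
    unfolding Gm_def using pV p_def by (auto intro!: generate.incl)
  then have "bar d h (basisvec p) [^]\<^bsub>Gdh d h\<^esub> T \<in> Gm d h (length j - 1)"
    by (rule sub_pow[OF Gdh_group Gm_subgroup])
  then show ?thesis using e N_def by simp
qed



lemma claimB:
  assumes d: "d \<ge> 3" and j: "j \<in> tree_verts d h" and jn: "j \<noteq> []"
   and mem: "bar d h (basisvec j [^]\<^bsub>ZV d h\<^esub> (k::nat)) \<in> Gm d h (length j - 1)"
  shows "th d (Suc (Suc (h - length j))) dvd k"
proof -
  define n where "n = length j"
  define N where "N = th d (Suc (Suc (h - n)))"
  define T where "T = th d (Suc (h - n))"
  define p where "p = butlast j"
  define c' where "c' = (if last j = 0 then 1 else 0::nat)"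
  define j' where "j' = p @ [c']"
  have jeq: "j = p @ [last j]" using jn p_def by simp
  have "p @ [last j] \<in> tree_verts d h" using j jeq[symmetric] by simp
  then have pV: "p \<in> tree_verts d h" and ph: "length p < h"
    using snoc_in by blast+
  have c'lt: "c' < (if p = [] then d else d - 1)" using d by (auto simp: c'_def)
  have j'V: "j' \<in> tree_verts d h" using snoc_in pV ph c'lt j'_def by blast
  have j'n: "j' \<noteq> []" by (simp add: j'_def)
  have j'len: "length j' = n" using jn unfolding j'_def p_def n_def by (cases j) auto
  have bj': "butlast j' = butlast j" by (simp add: j'_def p_def)
  have jj': "j \<noteq> j'"
  proof
    assume "j = j'" then have "last j = c'" by (simp add: j'_def)
    then show False by (simp add: c'_def split: if_splits)
  qed
  define \<phi> where "\<phi> = (\<lambda>u. int (Fn d h j u) - int (Fn d h j' u))"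
  define \<Phi> where "\<Phi> = (\<lambda>w::nat list \<Rightarrow> int. \<Sum>i\<in>tree_verts d h. \<phi> i * w i)"
  have \<Phi>_add: "\<Phi> (\<lambda>k. a k + b k) = \<Phi> a + \<Phi> b" for a b
    by (simp add: \<Phi>_def distrib_left sum.distrib)
  have \<Phi>_neg: "\<Phi> (\<lambda>k. - a k) = - \<Phi> a" for a
    by (simp add: \<Phi>_def sum_negf)
  have \<Phi>_zero: "\<Phi> (\<lambda>k. 0) = 0" by (simp add: \<Phi>_def)
  have \<Phi>_basis: "\<Phi> (basisvec i) = \<phi> i" if "i \<in> tree_verts d h" for i
    unfolding \<Phi>_def by (rule basis_sum[OF that])
  have \<phi>_low: "\<phi> i = 0" if "length i < n" for i
  proof -
    have "take (length j) i = i" "take (length j') i = i" using that n_def j'len by auto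
    moreover have "i \<noteq> j" "i \<noteq> j'" using that n_def j'len by auto
    ultimately show ?thesis by (simp add: \<phi>_def Fn_def)
  qed
  have \<Phi>_delta: "int N dvd \<Phi> (delta_row d h v)" if v: "v \<in> tree_verts d h" for v
  proof -
    have "\<Phi> (delta_row d h v) = int d * \<phi> v - (\<Sum>i\<in>tree_verts d h. adjmat d h v i * \<phi> i)"
      unfolding \<Phi>_def by (rule delta_pair[OF v])
    also have "\<dots> = (int d * int (Fn d h j v) - (\<Sum>i\<in>tree_verts d h. adjmat d h v i * int (Fn d h j i)))
        - (int d * int (Fn d h j' v) - (\<Sum>i\<in>tree_verts d h. adjmat d h v i * int (Fn d h j' i)))"
      by (simp add: \<phi>_def right_diff_distrib sum_subtractf)
    also have "\<dots> = (if v = j then int N else 0) - (if v = j' then int N else 0)"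
    proof -
      have k1: "int d * int (Fn d h j v) - (\<Sum>i\<in>tree_verts d h. adjmat d h v i * int (Fn d h j i))
          = (if v = j then int N else 0) - (if v = butlast j then int T else 0)"
        unfolding N_def T_def n_def by (rule key[OF d j jn v])
      have k2: "int d * int (Fn d h j' v) - (\<Sum>i\<in>tree_verts d h. adjmat d h v i * int (Fn d h j' i))
          = (if v = j' then int N else 0) - (if v = butlast j then int T else 0)"
        using key[OF d j'V j'n v] unfolding N_def T_def j'len bj' .
      show ?thesis unfolding k1 k2 by simp
    qed
    finally show ?thesis by simp
  qed
  have Lam_dvd: "int N dvd \<Phi> w" if "w \<in> Lam d h" for w
    using that unfolding Lam_def
  proof (induction rule: generate.induct)
    case one then show ?case using \<Phi>_zero by simp
  next
    case (incl x) then show ?case using \<Phi>_delta by auto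
  next
    case (inv x)
    then obtain v where v: "v \<in> tree_verts d h" "x = delta_row d h v" by auto
    then show ?case using \<Phi>_delta[OF v(1)] \<Phi>_neg ZV_inv[OF delta_carrier] by simp
  next
    case (eng a b) then show ?case using \<Phi>_add by simp
  qed
  have Gm_rep: "\<exists>w\<in>carrier (ZV d h). Xs = bar d h w \<and> int N dvd \<Phi> w" if "Xs \<in> Gm d h (length j - 1)" for Xs
    using that unfolding Gm_def
  proof (induction rule: generate.induct)
    case one
    have "(\<lambda>k. 0::int) \<in> carrier (ZV d h)" by simp
    moreover have "\<one>\<^bsub>Gdh d h\<^esub> = bar d h (\<lambda>k. 0)" by (simp only: bar_zero Gdh_one)
    moreover have "int N dvd \<Phi> (\<lambda>k. 0)" by (simp only: \<Phi>_zero dvd_0_right)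
    ultimately show ?case by blast
  next
    case (incl x)
    then obtain i where i: "i \<in> tree_verts d h" "length i \<le> length j - 1" "x = bar d h (basisvec i)" by blast
    have "length i < n" using i(2) jn unfolding n_def by (cases j) auto
    then have z: "\<phi> i = 0" by (rule \<phi>_low)
    have "\<Phi> (basisvec i) = 0" using \<Phi>_basis[OF i(1)] z by simp
    then have "int N dvd \<Phi> (basisvec i)" by simp
    then show ?case using i(3) basis_carrier[OF i(1)] by blast
  next
    case (inv x)
    then obtain i where i: "i \<in> tree_verts d h" "length i \<le> length j - 1" "x = bar d h (basisvec i)" by blast
    have "length i < n" using i(2) jn unfolding n_def by (cases j) auto
    then have z: "\<phi> i = 0" by (rule \<phi>_low)
    have "inv\<^bsub>Gdh d h\<^esub> x = bar d h (\<lambda>k. - basisvec i k)"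
      unfolding i(3) bar_inv[OF basis_carrier[OF i(1)]] ZV_inv[OF basis_carrier[OF i(1)]] ..
    moreover have "\<Phi> (\<lambda>k. - basisvec i k) = 0" unfolding \<Phi>_neg \<Phi>_basis[OF i(1)] z by simp
    moreover have "(\<lambda>k. - basisvec i k) \<in> carrier (ZV d h)" using basis_carrier[OF i(1)] by simp
    ultimately show ?case by (metis dvd_0_right)
  next
    case (eng a b)
    then obtain wa wb where wa: "wa \<in> carrier (ZV d h)" "a = bar d h wa" "int N dvd \<Phi> wa"
      and wb: "wb \<in> carrier (ZV d h)" "b = bar d h wb" "int N dvd \<Phi> wb" by blast
    have "a \<otimes>\<^bsub>Gdh d h\<^esub> b = bar d h (wa \<otimes>\<^bsub>ZV d h\<^esub> wb)" unfolding wa(2) wb(2) by (rule bar_mult[OF wa(1) wb(1)])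
    moreover have "wa \<otimes>\<^bsub>ZV d h\<^esub> wb \<in> carrier (ZV d h)" by (rule monoid.m_closed[OF ZV_monoid wa(1) wb(1)])
    moreover have "int N dvd \<Phi> (wa \<otimes>\<^bsub>ZV d h\<^esub> wb)" using wa(3) wb(3) \<Phi>_add[of wa wb] by simp
    ultimately show ?case by blast
  qed
  define xk where "xk = basisvec j [^]\<^bsub>ZV d h\<^esub> k"
  have xk: "xk = (\<lambda>i. int k * basisvec j i)" unfolding xk_def by (rule ZV_pow[OF basis_carrier[OF j]])
  have xkc: "xk \<in> carrier (ZV d h)" using basis_carrier[OF j] xk by (simp add: basisvec_def)
  obtain w where w: "w \<in> carrier (ZV d h)" "bar d h xk = bar d h w" "int N dvd \<Phi> w"
    using Gm_rep[OF mem[folded xk_def]] by blast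
  have "xk \<otimes>\<^bsub>ZV d h\<^esub> inv\<^bsub>ZV d h\<^esub> w \<in> Lam d h" by (rule bar_eq[OF xkc w(1) w(2)])
  then have "int N dvd \<Phi> (\<lambda>i. xk i + - w i)" using Lam_dvd ZV_inv[OF w(1)] by simp
  moreover have "\<Phi> (\<lambda>i. xk i - w i) = \<Phi> xk - \<Phi> w" by (simp add: \<Phi>_def right_diff_distrib sum_subtractf)
  ultimately have "int N dvd \<Phi> xk - \<Phi> w" by simp
  then have "int N dvd (\<Phi> xk - \<Phi> w) + \<Phi> w" using w(3) by (rule dvd_add)
  then have "int N dvd \<Phi> xk" by simp
  moreover have "\<Phi> xk = int k * \<phi> j"
  proof -
    have "\<Phi> xk = (\<Sum>i\<in>tree_verts d h. (\<phi> i * int k) * basisvec j i)"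
      unfolding \<Phi>_def xk by (simp add: algebra_simps)
    also have "\<dots> = \<phi> j * int k" by (rule basis_sum[OF j])
    finally show ?thesis by simp
  qed
  moreover have "\<phi> j = int T"
  proof -
    have "take (length j') j \<noteq> j'" using j'len n_def jj' by simp
    then show ?thesis by (simp add: \<phi>_def Fn_def T_def n_def)
  qed
  ultimately have dv: "int N dvd int k * int T" by simp
  have NT: "int N = 1 + (int d - 1) * int T" using th_Suc_int[of d "Suc (h - n)"] d N_def T_def by simp
  have "int k = int k * int N - (int d - 1) * (int k * int T)" unfolding NT by (simp add: algebra_simps)
  moreover have "int N dvd int k * int N - (int d - 1) * (int k * int T)"
    using dv by (intro dvd_diff) auto
  ultimately have "int N dvd int k" by simp
  then show ?thesis using N_def n_def by simp
qed



lemma theta_th: "d \<ge> 3 \<Longrightarrow> theta d a = real (th d a)"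
proof -
  assume d: "d \<ge> 3"
  have "real (th d a) = (\<Sum>i<a. (real d - 1) ^ i)" using d by (simp add: th_def of_nat_diff)
  also have "\<dots> = (1 - (real d - 1) ^ a) / (1 - (real d - 1))" using d by (simp add: sum_gp_strict)
  also have "\<dots> = ((real d - 1) ^ a - 1) / (real d - 2)"
  proof -
    have "(1 - (real d - 1) ^ a) / (1 - (real d - 1)) = (- ((real d - 1) ^ a - 1)) / (- (real d - 2))" by simp
    then show ?thesis by (simp only: minus_divide_divide)
  qed
  finally show ?thesis by (simp add: theta_def)
qed

theorem proposition8p10:
  fixes d h n :: nat and j :: "nat list"
  assumes "d \<ge> 3" and "h \<ge> 1" and "1 \<le> n" and "n \<le> h"
    and "j \<in> tree_verts d h" and "length j = n"
  shows "real (group.ord (Gdh d h Mod Gm d h (n - 1))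
                (Gm d h (n - 1) #>\<^bsub>Gdh d h\<^esub> bar d h (basisvec j)))
         = theta d (h + 2 - n)"
proof -
  have d: "d \<ge> 3" and j: "j \<in> tree_verts d h" using assms by auto
  have jn: "j \<noteq> []" using assms by auto
  define H where "H = Gm d h (n - 1)"
  define Q where "Q = Gdh d h Mod H"
  define y where "y = H #>\<^bsub>Gdh d h\<^esub> bar d h (basisvec j)"
  define N where "N = th d (Suc (Suc (h - n)))"
  have Hn: "H \<lhd> Gdh d h" unfolding H_def by (rule Gm_normal)
  have sH: "subgroup H (Gdh d h)" unfolding H_def by (rule Gm_subgroup)
  have Qg: "group Q" unfolding Q_def by (rule normal.factorgroup_is_group[OF Hn])
  have bj: "bar d h (basisvec j) \<in> carrier (Gdh d h)" by (rule bar_carrier[OF basis_carrier[OF j]])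
  have yc: "y \<in> carrier Q" unfolding Q_def y_def carrier_FactGroup using bj by auto
  have ypow: "y [^]\<^bsub>Q\<^esub> k = \<one>\<^bsub>Q\<^esub> \<longleftrightarrow> bar d h (basisvec j [^]\<^bsub>ZV d h\<^esub> k) \<in> H" for k :: nat
  proof -
    have "y [^]\<^bsub>Q\<^esub> k = H #>\<^bsub>Gdh d h\<^esub> (bar d h (basisvec j) [^]\<^bsub>Gdh d h\<^esub> k)"
      unfolding Q_def y_def by (rule normal.FactGroup_pow[OF Hn bj])
    also have "\<dots> = H #>\<^bsub>Gdh d h\<^esub> bar d h (basisvec j [^]\<^bsub>ZV d h\<^esub> k)"
      by (simp only: bar_pow[OF basis_carrier[OF j]])
    finally have e: "y [^]\<^bsub>Q\<^esub> k = H #>\<^bsub>Gdh d h\<^esub> bar d h (basisvec j [^]\<^bsub>ZV d h\<^esub> k)" .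
    have bc: "bar d h (basisvec j [^]\<^bsub>ZV d h\<^esub> k) \<in> carrier (Gdh d h)"
      by (rule bar_carrier[OF monoid.nat_pow_closed[OF ZV_monoid basis_carrier[OF j]]])
    have o: "\<one>\<^bsub>Q\<^esub> = H" unfolding Q_def by simp
    show ?thesis unfolding e o
    proof
      assume "H #>\<^bsub>Gdh d h\<^esub> bar d h (basisvec j [^]\<^bsub>ZV d h\<^esub> k) = H"
      then show "bar d h (basisvec j [^]\<^bsub>ZV d h\<^esub> k) \<in> H"
        by (rule group.coset_join1[OF Gdh_group _ bc sH])
    next
      assume "bar d h (basisvec j [^]\<^bsub>ZV d h\<^esub> k) \<in> H"
      then show "H #>\<^bsub>Gdh d h\<^esub> bar d h (basisvec j [^]\<^bsub>ZV d h\<^esub> k) = H"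
        by (rule group.coset_join2[OF Gdh_group bc sH])
    qed
  qed
  have A: "y [^]\<^bsub>Q\<^esub> N = \<one>\<^bsub>Q\<^esub>"
    using ypow claimA[OF d j jn] assms(6) unfolding N_def H_def by simp
  have o1: "group.ord Q y dvd N" using A group.pow_eq_id[OF Qg yc] by blast
  have "y [^]\<^bsub>Q\<^esub> (group.ord Q y) = \<one>\<^bsub>Q\<^esub>" by (rule group.pow_ord_eq_1[OF Qg yc])
  then have "bar d h (basisvec j [^]\<^bsub>ZV d h\<^esub> (group.ord Q y)) \<in> Gm d h (length j - 1)"
    using ypow assms(6) H_def by simp
  then have o2: "N dvd group.ord Q y" using claimB[OF d j jn] assms(6) N_def by simp
  have ord: "group.ord Q y = N" using o1 o2 by (rule dvd_antisym)
  have "h + 2 - n = Suc (Suc (h - n))" using assms by simp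
  then show ?thesis using ord theta_th[OF d] unfolding Q_def y_def H_def N_def by simp
qed

end
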